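(* The disjoint-greedy algorithm has approximation ratio $\Omega\!\left(\frac{n}{\log^2 n}\right)$ for the minimum-cardinality island partition problem. That is, there exist a constant $c>0$ and inputs $S$ with arbitrarily large numbers $n$ of points such that the island partition returned by disjoint-greedy on $S$ contains at least $c\cdot \frac{n}{\log^2 n}\cdot \mathrm{Opt}_{\mathrm{P}}(S)$ islands.
   Context: The input is a set $S$ of $n$ points in the plane, each having one of $k\ge 2$ colors. A set of points is monochromatic if all its points have the same color. An island is a subset $I\subseteq S$ with $\mathrm{CH}(I)\cap S = I$, where $\mathrm{CH}(I)$ is the convex hull of $I$. An island partition of $S$ is a partition of $S$ into monochromatic islands whose convex hulls are pairwise disjoint; $\mathrm{Opt}_{\mathrm{P}}(S)$ denotes the minimum number of islands in an island partition of $S$. The disjoint-greedy algorithm builds an island partition by repeatedly choosing, among all monochromatic islands whose convex hull is disjoint from the convex hulls of all islands chosen so far, one that covers the largest number of not-yet-covered points of $S$, until all points of $S$ are covered. *)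

theory Defs
  imports "HOL-Analysis.Analysis"
begin

type_synonym point = "real \<times> real"

definition monochromatic :: "(point \<Rightarrow> nat) \<Rightarrow> point set \<Rightarrow> bool" where
  "monochromatic col I \<longleftrightarrow> (\<forall>x\<in>I. \<forall>y\<in>I. col x = col y)"

definition island :: "point set \<Rightarrow> point set \<Rightarrow> bool" where
  "island S I \<longleftrightarrow> I \<subseteq> S \<and> convex hull I \<inter> S = I"

definition island_partition :: "point set \<Rightarrow> (point \<Rightarrow> nat) \<Rightarrow> point set set \<Rightarrow> bool" where
  "island_partition S col P \<longleftrightarrow>
     finite P \<and> \<Union>P = S \<and> {} \<notin> P \<and>
     (\<forall>I\<in>P. monochromatic col I \<and> island S I) \<and>
     (\<forall>I\<in>P. \<forall>J\<in>P. I \<noteq> J \<longrightarrow> convex hull I \<inter> convex hull J = {})"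

definition Opt_P :: "point set \<Rightarrow> (point \<Rightarrow> nat) \<Rightarrow> nat" where
  "Opt_P S col = Min {card P | P. island_partition S col P}"

definition greedy_candidate :: "point set \<Rightarrow> (point \<Rightarrow> nat) \<Rightarrow> point set list \<Rightarrow> point set \<Rightarrow> bool" where
  "greedy_candidate S col prev J \<longleftrightarrow>
     monochromatic col J \<and> island S J \<and>
     (\<forall>I\<in>set prev. convex hull J \<inter> convex hull I = {})"

text \<open>A complete run of disjoint-greedy (with arbitrary tie-breaking), given as the list of
  islands in the order they are chosen.\<close>
definition greedy_run :: "point set \<Rightarrow> (point \<Rightarrow> nat) \<Rightarrow> point set list \<Rightarrow> bool" where
  "greedy_run S col Is \<longleftrightarrow>
     (\<forall>j < length Is.
        \<Union>(set (take j Is)) \<noteq> S \<and>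
        greedy_candidate S col (take j Is) (Is ! j) \<and>
        (\<forall>J. greedy_candidate S col (take j Is) J \<longrightarrow>
              card (J - \<Union>(set (take j Is))) \<le> card (Is ! j - \<Union>(set (take j Is))))) \<and>
     \<Union>(set Is) = S"

end

theory Submission
  imports Defs
begin


fun tz :: "nat \<Rightarrow> nat" where
  "tz n = (if n = 0 then 0 else if odd n then 0 else Suc (tz (n div 2)))"
declare tz.simps[simp del]

lemma tz_0[simp]: "tz 0 = 0" by (simp add: tz.simps)
lemma tz_odd1: "odd n \<Longrightarrow> tz n = 0" by (simp add: tz.simps)
lemma tz_even: "n \<noteq> 0 \<Longrightarrow> even n \<Longrightarrow> tz n = Suc (tz (n div 2))" by (simp add: tz.simps[of n])

lemma tz_dvd: "2 ^ tz n dvd n"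
proof (induction n rule: tz.induct)
  case (1 n)
  show ?case
  proof (cases "n = 0 \<or> odd n")
    case True then show ?thesis by (auto simp: tz_odd1)
  next
    case False
    then obtain m where m: "n = 2 * m" by (auto elim: evenE)
    have t: "tz n = Suc (tz m)" using False m by (simp add: tz_even)
    have "2 ^ tz m dvd m" using 1 False m by simp
    then have "2 * 2 ^ tz m dvd 2 * m" by (rule mult_dvd_mono[OF dvd_refl])
    then show ?thesis using t m by simp
  qed
qed

lemma tz_ge: "0 < n \<Longrightarrow> 2 ^ k dvd n \<Longrightarrow> k \<le> tz n"
proof (induction k arbitrary: n)
  case 0 then show ?case by simp
next
  case (Suc k)
  have "2 dvd n" using Suc(3) by (rule dvd_trans[rotated]) simp
  then obtain m where m: "n = 2 * m" by blast
  have m0: "0 < m" using Suc(2) m by simp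
  have "2 * 2 ^ k dvd 2 * m" using Suc(3) m by simp
  then have "2 ^ k dvd m" by simp
  then have "k \<le> tz m" using Suc.IH m0 by blast
  moreover have "tz n = Suc (tz m)" using m m0 by (simp add: tz_even)
  ultimately show ?case by simp
qed

lemma tz_odd: "odd m \<Longrightarrow> tz (2 ^ k * m) = k"
proof (induction k)
  case 0 then show ?case by (simp add: tz_odd1)
next
  case (Suc k)
  have "m \<noteq> 0" using Suc(2) by (rule contrapos_nn) simp
  then have "2 ^ Suc k * m \<noteq> 0" by simp
  moreover have "even (2 ^ Suc k * m)" by simp
  moreover have "2 ^ Suc k * m div 2 = 2 ^ k * m" by simp
  ultimately show ?case using Suc by (simp add: tz_even)
qed

lemma tz_le: "0 < n \<Longrightarrow> n < 2 ^ Suc D \<Longrightarrow> tz n \<le> D"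
proof -
  assume a: "0 < n" "n < 2 ^ Suc D"
  have "2 ^ tz n \<le> n" using tz_dvd[of n] a(1) by (simp add: dvd_imp_le)
  then have "2 ^ tz n < (2::nat) ^ Suc D" using a by linarith
  then have "tz n < Suc D" using power_less_imp_less_exp[of 2 "tz n" "Suc D"] by simp
  then show ?thesis by simp
qed

lemma tz_sum: "2 ^ n dvd b \<Longrightarrow> 2 * (\<Sum>p\<in>{b<..<b + 2 ^ n}. (2::nat) ^ tz p) = n * 2 ^ n"
proof (induction n arbitrary: b)
  case 0 then show ?case by simp
next
  case (Suc n)
  have split: "{b<..<b + 2 ^ Suc n} = ({b<..<b + 2 ^ n} \<union> {b + 2^n}) \<union> {b + 2^n<..<(b + 2^n) + 2 ^ n}"
    by auto
  obtain c where c: "b = 2 ^ Suc n * c" using Suc(2) by blast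
  have d1: "2 ^ n dvd b" using c by simp
  have d2: "2 ^ n dvd b + 2 ^ n" using d1 by simp
  have e: "b + 2 ^ n = 2 ^ n * (2 * c + 1)" using c by (simp add: algebra_simps)
  have tzm: "tz (b + 2 ^ n) = n" unfolding e by (rule tz_odd) simp
  have "(\<Sum>p\<in>{b<..<b + 2 ^ Suc n}. (2::nat) ^ tz p) =
        ((\<Sum>p\<in>{b<..<b + 2 ^ n}. 2 ^ tz p) + 2 ^ tz (b + 2^n)) + (\<Sum>p\<in>{b + 2^n<..<(b + 2^n) + 2 ^ n}. 2 ^ tz p)"
    unfolding split
    by (subst sum.union_disjoint; simp; subst sum.union_disjoint; simp)
  then show ?case using Suc.IH[OF d1] Suc.IH[OF d2] tzm by (simp add: algebra_simps)
qed


lemma horiz_seg: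
  fixes P P' :: "real \<times> real"
  assumes "snd P = c" "snd P' = c" "fst P \<le> bx" "bx \<le> fst P'"
  shows "(bx, c) \<in> closed_segment P P'"
proof (cases "fst P = fst P'")
  case True
  then have "(bx, c) = P" using assms by (simp add: prod_eq_iff)
  then show ?thesis by simp
next
  case False
  then have lt: "fst P < fst P'" using assms by simp
  define u where "u = (bx - fst P) / (fst P' - fst P)"
  have u0: "0 \<le> u" using assms lt by (simp add: u_def)
  have u1: "u \<le> 1" using assms lt by (simp add: u_def)
  have uu: "u * (fst P' - fst P) = bx - fst P" using lt by (simp add: u_def)
  have "(1 - u) * fst P + u * fst P' = bx" using uu by (simp add: algebra_simps)
  moreover have "(1 - u) * snd P + u * snd P' = c" using assms by (simp add: algebra_simps)
  ultimately have "(bx, c) = (1 - u) *\<^sub>R P + u *\<^sub>R P'" by (simp add: prod_eq_iff)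
  then show ?thesis using u0 u1 unfolding closed_segment_def by blast
qed

lemma vert_seg:
  fixes P P' :: "real \<times> real"
  assumes "fst P = c" "fst P' = c" "snd P \<le> by" "by \<le> snd P'"
  shows "(c, by) \<in> closed_segment P P'"
proof (cases "snd P = snd P'")
  case True
  then have "(c, by) = P" using assms by (simp add: prod_eq_iff)
  then show ?thesis by simp
next
  case False
  then have lt: "snd P < snd P'" using assms by simp
  define u where "u = (by - snd P) / (snd P' - snd P)"
  have u0: "0 \<le> u" using assms lt by (simp add: u_def)
  have u1: "u \<le> 1" using assms lt by (simp add: u_def)
  have uu: "u * (snd P' - snd P) = by - snd P" using lt by (simp add: u_def)
  have "(1 - u) * snd P + u * snd P' = by" using uu by (simp add: algebra_simps)
  moreover have "(1 - u) * fst P + u * fst P' = c" using assms by (simp add: algebra_simps)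
  ultimately have "(c, by) = (1 - u) *\<^sub>R P + u *\<^sub>R P'" by (simp add: prod_eq_iff)
  then show ?thesis using u0 u1 unfolding closed_segment_def by blast
qed

lemma seg_in_hull:
  fixes A :: "(real \<times> real) set"
  assumes "a \<in> A" "b \<in> A" "z \<in> closed_segment a b"
  shows "z \<in> convex hull A"
proof -
  have "closed_segment a b \<subseteq> convex hull A"
    using assms by (simp add: closed_segment_subset hull_inc convex_convex_hull)
  then show ?thesis using assms by blast
qed

lemma cross_pt:
  fixes A :: "(real \<times> real) set"
  assumes A: "a \<in> A" "a' \<in> A" "q \<in> A"
    and t: "0 \<le> t" "t \<le> 1"
    and c: "snd a = c" "snd a' = c"
    and b1: "fst a + t * (fst q - fst a) \<le> bx" and b2: "bx \<le> fst a' + t * (fst q - fst a')"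
  shows "(bx, c + t * (snd q - c)) \<in> convex hull A"
proof -
  define P where "P = (1 - t) *\<^sub>R a + t *\<^sub>R q"
  define P' where "P' = (1 - t) *\<^sub>R a' + t *\<^sub>R q"
  have P: "P \<in> convex hull A"
    unfolding P_def by (rule convexD[OF convex_convex_hull]) (use A t in \<open>auto intro: hull_inc\<close>)
  have P': "P' \<in> convex hull A"
    unfolding P'_def by (rule convexD[OF convex_convex_hull]) (use A t in \<open>auto intro: hull_inc\<close>)
  have sP: "snd P = c + t * (snd q - c)" unfolding P_def using c by (simp add: algebra_simps)
  have sP': "snd P' = c + t * (snd q - c)" unfolding P'_def using c by (simp add: algebra_simps)
  have fP: "fst P = fst a + t * (fst q - fst a)" unfolding P_def by (simp add: algebra_simps)
  have fP': "fst P' = fst a' + t * (fst q - fst a')" unfolding P'_def by (simp add: algebra_simps)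
  have "(bx, c + t * (snd q - c)) \<in> closed_segment P P'"
    by (rule horiz_seg) (use sP sP' fP fP' b1 b2 in auto)
  moreover have "closed_segment P P' \<subseteq> convex hull A"
    using P P' by (simp add: closed_segment_subset convex_convex_hull)
  ultimately show ?thesis by blast
qed

lemma hull_line:
  fixes A :: "(real \<times> real) set"
  assumes "A \<subseteq> {z. snd z = c}"
  shows "convex hull A \<subseteq> {z. snd z = c}"
proof -
  have "{z::real\<times>real. snd z = c} = UNIV \<times> {c}" by auto
  then have "convex {z::real\<times>real. snd z = c}" by (simp add: convex_Times)
  then show ?thesis using assms by (rule hull_minimal[rotated])
qed

lemma hull_box:
  fixes A :: "(real \<times> real) set"
  assumes "A \<subseteq> {x1..x2} \<times> {y1..y2}"
  shows "convex hull A \<subseteq> {x1..x2} \<times> {y1..y2}"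
  using assms by (rule hull_minimal) (simp add: convex_Times)


definition rr :: "nat \<Rightarrow> nat" where "rr p = 2 ^ tz p"

lemma rr_pos[simp]: "0 < rr p" by (simp add: rr_def)

definition redpt :: "nat \<Rightarrow> nat \<Rightarrow> nat \<Rightarrow> real \<times> real" where
  "redpt p i y = (3 * real p + real i / real (rr p), real y)"

lemma redpt_fst_ge: "3 * real p \<le> fst (redpt p i y)"
  by (simp add: redpt_def)

lemma redpt_fst_lt: "i < rr p \<Longrightarrow> fst (redpt p i y) < 3 * real p + 1"
  by (simp add: redpt_def)

lemma redpt_snd[simp]: "snd (redpt p i y) = real y"
  by (simp add: redpt_def)

lemma redpt_0: "redpt p 0 y = (3 * real p, real y)"
  by (simp add: redpt_def)

lemma redpt_inj: "redpt p i y = redpt p i' y' \<Longrightarrow> i = i' \<and> y = y'"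
  using rr_pos[of p] by (auto simp: redpt_def)

locale cons =
  fixes D :: nat
  assumes D1: "1 \<le> D"
begin

definition M :: nat where "M = 2 ^ Suc D - 1"
definition dl :: real where "dl = 1 / (3 * real M + 4)"
definition yb :: "nat \<Rightarrow> real" where
  "yb j = (if j < D then real j + dl else real (j - D) + 1 - dl)"
definition yl :: "nat \<Rightarrow> nat" where
  "yl j = (if j < D then j else j - D)"
definition bluept :: "nat \<Rightarrow> nat \<Rightarrow> real \<times> real" where
  "bluept q j = (3 * real q + 2, yb j)"
definition strip :: "nat \<Rightarrow> (real \<times> real) set" where
  "strip p = {redpt p i y | i y. i < rr p \<and> y \<le> D}"
definition Red :: "(real \<times> real) set" where "Red = (\<Union>p\<in>{1..M}. strip p)"
definition Blue :: "(real \<times> real) set" where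
  "Blue = {bluept q j | q j. 1 \<le> q \<and> q < M \<and> j < 2 * D}"
definition SS :: "(real \<times> real) set" where "SS = Red \<union> Blue"
definition cy :: "real \<Rightarrow> nat" where
  "cy y = (if y = of_int \<lfloor>y\<rfloor> then 0 else if y - of_int \<lfloor>y\<rfloor> < 1/2 then Suc (nat \<lfloor>y\<rfloor>)
           else Suc (D + nat \<lfloor>y\<rfloor>))"
definition colr :: "real \<times> real \<Rightarrow> nat" where "colr z = cy (snd z)"

lemma M1: "M + 1 = 2 ^ Suc D"
proof -
  have "(1::nat) \<le> 2 ^ Suc D" by simp
  then show ?thesis by (simp add: M_def)
qed

lemma M_ge: "2 ^ D \<le> M" "3 \<le> M"
proof -
  have "2 ^ D \<ge> (2::nat)" using D1 by (metis power_one_right power_increasing le_numeral_extra(1) one_le_numeral  pos2 Suc_1 le_add2)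
  then show "2 ^ D \<le> M" "3 \<le> M" using M1 by auto
qed

lemma dl_pos: "0 < dl" by (simp add: dl_def add_pos_nonneg)
lemma dl_small: "dl < 1/2"
  using M_ge by (simp add: dl_def divide_simps)
lemma dl_mult: "dl * (3 * real M) < 1"
  by (simp add: dl_def divide_simps)

lemma tz_le_M: "1 \<le> p \<Longrightarrow> p \<le> M \<Longrightarrow> tz p \<le> D"
  using tz_le[of p D] M1 by simp

lemma rr_le: "1 \<le> p \<Longrightarrow> p \<le> M \<Longrightarrow> rr p \<le> 2 ^ D"
  using tz_le_M by (simp add: rr_def power_increasing)

lemma cy_int[simp]: "cy (real y) = 0" by (simp add: cy_def)

lemma yl_lt: "j < 2 * D \<Longrightarrow> yl j < D" by (cases "j < D") (auto simp: yl_def)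

lemma yb_between: "j < 2 * D \<Longrightarrow> real (yl j) < yb j \<and> yb j < real (yl j) + 1"
  using dl_pos dl_small by (auto simp: yb_def yl_def)

lemma cy_yb: "j < 2 * D \<Longrightarrow> cy (yb j) = Suc j"
proof -
  assume j: "j < 2 * D"
  have fl: "\<lfloor>yb j\<rfloor> = int (yl j)" using yb_between[OF j] by (intro floor_unique) auto
  have ni: "yb j \<noteq> of_int \<lfloor>yb j\<rfloor>" using yb_between[OF j] fl by auto
  show ?thesis
  proof (cases "j < D")
    case True
    then have "yb j - of_int \<lfloor>yb j\<rfloor> = dl" using fl by (simp add: yb_def yl_def)
    then show ?thesis using ni dl_small fl True by (simp add: cy_def yl_def)
  next
    case False
    then have "yb j - of_int \<lfloor>yb j\<rfloor> = 1 - dl" using fl by (simp add: yb_def yl_def)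
    then show ?thesis using ni dl_small fl False j by (simp add: cy_def yl_def)
  qed
qed

lemma yb_inj: "j < 2 * D \<Longrightarrow> j' < 2 * D \<Longrightarrow> yb j = yb j' \<Longrightarrow> j = j'"
  using cy_yb by (metis nat.inject)

lemma yb_not_int: "j < 2 * D \<Longrightarrow> yb j \<noteq> real y"
  using cy_yb by (metis cy_int nat.distinct(1))

lemma colr_red[simp]: "colr (redpt p i y) = 0" by (simp add: colr_def)
lemma colr_blue: "j < 2 * D \<Longrightarrow> colr (bluept q j) = Suc j" by (simp add: colr_def bluept_def cy_yb)

lemma strip_mem: "z \<in> strip p \<longleftrightarrow> (\<exists>i y. i < rr p \<and> y \<le> D \<and> z = redpt p i y)"
  by (auto simp: strip_def)

lemma strip_box: "strip p \<subseteq> {3 * real p .. 3 * real p + 1} \<times> {0 .. real D}"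
proof
  fix z assume "z \<in> strip p"
  then obtain i y where iy: "i < rr p" "y \<le> D" "z = redpt p i y" by (auto simp: strip_mem)
  have "3 * real p \<le> fst z" "fst z \<le> 3 * real p + 1" "0 \<le> snd z" "snd z \<le> real D"
    using redpt_fst_ge[of p i y] redpt_fst_lt[OF iy(1), of y] iy by auto
  then show "z \<in> {3 * real p .. 3 * real p + 1} \<times> {0 .. real D}" by (cases z) auto
qed

lemma hull_strip_box: "convex hull strip p \<subseteq> {3 * real p .. 3 * real p + 1} \<times> {0 .. real D}"
  by (rule hull_box[OF strip_box])

lemma red_mem: "z \<in> Red \<longleftrightarrow> (\<exists>p i y. 1 \<le> p \<and> p \<le> M \<and> i < rr p \<and> y \<le> D \<and> z = redpt p i y)"
  unfolding Red_def strip_mem UN_iff by (auto simp: Bex_def)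

lemma blue_mem: "z \<in> Blue \<longleftrightarrow> (\<exists>q j. 1 \<le> q \<and> q < M \<and> j < 2 * D \<and> z = bluept q j)"
  by (auto simp: Blue_def)

lemma red_blue_disj: "Red \<inter> Blue = {}"
  using yb_not_int by (auto simp: red_mem blue_mem bluept_def redpt_def)

lemma nat_from_real_le: "3 * real a \<le> 3 * real b + 1 \<Longrightarrow> a \<le> b"
proof -
  assume "3 * real a \<le> 3 * real b + 1"
  then have "real (3 * a) \<le> real (3 * b + 1)" by simp
  then have "3 * a \<le> 3 * b + 1" by (simp only: of_nat_le_iff)
  then show ?thesis by simp
qed

lemma box_SS: "z \<in> SS \<Longrightarrow> z \<in> {3 * real p .. 3 * real p + 1} \<times> {0 .. real D} \<Longrightarrow> z \<in> strip p"
proof -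
  assume z: "z \<in> SS" and b: "z \<in> {3 * real p .. 3 * real p + 1} \<times> {0 .. real D}"
  show ?thesis
  proof (cases "z \<in> Red")
    case True
    then obtain p' i y where pi: "1 \<le> p'" "p' \<le> M" "i < rr p'" "y \<le> D" "z = redpt p' i y"
      by (auto simp: red_mem)
    have "3 * real p' \<le> 3 * real p + 1" using b pi redpt_fst_ge[of p' i y] by auto
    then have "p' \<le> p" by (rule nat_from_real_le)
    moreover have "3 * real p < 3 * real p' + 1" using b pi redpt_fst_lt[of i p' y] by auto
    then have "3 * real p \<le> 3 * real p' + 1" by simp
    then have "p \<le> p'" by (rule nat_from_real_le)
    ultimately show ?thesis using pi by (auto simp: strip_mem)
  next
    case False
    then have "z \<in> Blue" using z by (simp add: SS_def)
    then obtain q j where qj: "z = bluept q j" by (auto simp: blue_mem)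
    have "3 * real p \<le> 3 * real q + 2" "3 * real q + 2 \<le> 3 * real p + 1"
      using b qj by (auto simp: bluept_def)
    then have "real (3 * p) \<le> real (3 * q + 2)" "real (3 * q + 2) \<le> real (3 * p + 1)" by simp_all
    then have "3 * p \<le> 3 * q + 2" "3 * q + 2 \<le> 3 * p + 1" by (simp_all only: of_nat_le_iff)
    then have False by presburger
    then show ?thesis by simp
  qed
qed

lemma strip_sub_Red: "1 \<le> p \<Longrightarrow> p \<le> M \<Longrightarrow> strip p \<subseteq> Red"
  by (auto simp: Red_def)

lemma island_strip: "1 \<le> p \<Longrightarrow> p \<le> M \<Longrightarrow> convex hull (strip p) \<inter> SS = strip p"
proof
  assume p: "1 \<le> p" "p \<le> M"
  show "convex hull strip p \<inter> SS \<subseteq> strip p"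
    using hull_strip_box box_SS by blast
  have "strip p \<subseteq> convex hull strip p" by (rule hull_subset)
  then show "strip p \<subseteq> convex hull strip p \<inter> SS"
    using strip_sub_Red[OF p] by (auto simp: SS_def)
qed

lemma strip_hull_disj: "p \<noteq> p' \<Longrightarrow> convex hull (strip p) \<inter> convex hull (strip p') = {}"
proof -
  assume ne: "p \<noteq> p'"
  have "({3 * real p .. 3 * real p + 1} \<times> {0 .. real D}) \<inter> ({3 * real p' .. 3 * real p' + 1} \<times> {0 .. real D}) = {}"
  proof (rule ccontr)
    assume "\<not> ?thesis"
    then obtain x where "3 * real p \<le> x" "x \<le> 3 * real p + 1" "3 * real p' \<le> x" "x \<le> 3 * real p' + 1" by auto
    then have "p \<le> p'" "p' \<le> p" using nat_from_real_le by (meson order_trans)+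
    then show False using ne by simp
  qed
  then show ?thesis using hull_strip_box[of p] hull_strip_box[of p'] by blast
qed

lemma blue_not_strip: "b \<in> Blue \<Longrightarrow> b \<notin> strip p"
  using yb_not_int by (auto simp: strip_mem blue_mem bluept_def redpt_def)

lemma blue_not_hull_strip: "b \<in> Blue \<Longrightarrow> b \<notin> convex hull (strip p)"
proof
  assume b: "b \<in> Blue" "b \<in> convex hull strip p"
  then have "b \<in> SS" by (simp add: SS_def)
  then have "b \<in> strip p" using b hull_strip_box box_SS by blast
  then show False using blue_not_strip b by blast
qed


lemma strip_image: "strip p = (\<lambda>(i, y). redpt p i y) ` ({..<rr p} \<times> {..D})"
  by (auto simp: strip_def)

lemma card_strip: "card (strip p) = rr p * (D + 1)"
proof -
  have "inj_on (\<lambda>(i, y). redpt p i y) ({..<rr p} \<times> {..D})"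
    by (auto simp: inj_on_def dest: redpt_inj)
  then show ?thesis unfolding strip_image by (simp add: card_image card_cartesian_product)
qed

lemma finite_strip[simp]: "finite (strip p)"
  unfolding strip_image by simp

lemma finite_Red: "finite Red" by (simp add: Red_def)

lemma Blue_image: "Blue = (\<lambda>(q, j). bluept q j) ` ({1..<M} \<times> {..<2 * D})"
proof (intro equalityI subsetI)
  fix z assume "z \<in> Blue"
  then obtain q j where "1 \<le> q" "q < M" "j < 2 * D" "z = bluept q j" by (auto simp: blue_mem)
  then show "z \<in> (\<lambda>(q, j). bluept q j) ` ({1..<M} \<times> {..<2 * D})"
    by (intro image_eqI[where x="(q, j)"]) auto
next
  fix z assume "z \<in> (\<lambda>(q, j). bluept q j) ` ({1..<M} \<times> {..<2 * D})"
  then show "z \<in> Blue" by (auto simp: blue_mem)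
qed

lemma finite_Blue: "finite Blue" unfolding Blue_image by simp

lemma finite_SS: "finite SS" by (simp add: SS_def finite_Red finite_Blue)

lemma card_row_strip:
  assumes "J \<subseteq> strip p" "\<forall>z\<in>J. snd z = c"
  shows "card J \<le> rr p"
proof -
  have "J \<subseteq> (\<lambda>i. (3 * real p + real i / real (rr p), c)) ` {..<rr p}"
  proof
    fix z assume z: "z \<in> J"
    have "z \<in> strip p" using assms(1) z by blast
    then obtain i y where "i < rr p" "z = redpt p i y" by (auto simp: strip_mem)
    moreover have "snd z = c" using assms(2) z by auto
    ultimately show "z \<in> (\<lambda>i. (3 * real p + real i / real (rr p), c)) ` {..<rr p}"
      by (auto simp: redpt_def)
  qed
  then have "card J \<le> card ((\<lambda>i. (3 * real p + real i / real (rr p), c)) ` {..<rr p})"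
    by (rule card_mono[rotated]) simp
  also have "\<dots> \<le> rr p" using card_image_le[of "{..<rr p}"] by simp
  finally show ?thesis .
qed

lemma red_fst_range: "1 \<le> p \<Longrightarrow> p \<le> M \<Longrightarrow> i < rr p \<Longrightarrow>
   3 \<le> fst (redpt p i y) \<and> fst (redpt p i y) \<le> 3 * real M + 1"
proof -
  assume a: "1 \<le> p" "p \<le> M" "i < rr p"
  have "3 * real p \<le> 3 * real M" using a by simp
  moreover have "3 \<le> 3 * real p" using a by simp
  ultimately show ?thesis using redpt_fst_ge[of p i y] redpt_fst_lt[OF a(3), of y] by auto
qed

lemma shift_small:
  assumes "0 \<le> t" "t \<le> dl" "3 \<le> u" "u \<le> 3 * real M + 1" "3 \<le> v" "v \<le> 3 * real M + 1"
  shows "\<bar>t * (u - v)\<bar> < 1"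
proof -
  have "\<bar>u - v\<bar> \<le> 3 * real M" using assms by linarith
  then have "\<bar>t * (u - v)\<bar> \<le> dl * (3 * real M)"
    using assms by (simp add: abs_mult mult_mono)
  then show ?thesis using dl_mult by linarith
qed

lemma same_run:
  assumes p: "1 \<le> p1" "p1 < p2" "p2 \<le> M" "1 \<le> p3" "p3 \<le> M"
    and i: "i1 < rr p1" "i2 < rr p2" "i3 < rr p3"
    and y: "y \<le> D" "y3 \<le> D" "y3 \<noteq> y"
  shows "\<exists>b\<in>Blue. b \<in> convex hull {redpt p1 i1 y, redpt p2 i2 y, redpt p3 i3 y3}"
proof -
  define a where "a = redpt p1 i1 y"
  define a' where "a' = redpt p2 i2 y"
  define q where "q = redpt p3 i3 y3"
  have ra: "3 \<le> fst a" "fst a \<le> 3 * real M + 1" using red_fst_range[of p1 i1 y] p i by (auto simp: a_def)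
  have ra': "3 \<le> fst a'" "fst a' \<le> 3 * real M + 1" using red_fst_range[of p2 i2 y] p i by (auto simp: a'_def)
  have rq: "3 \<le> fst q" "fst q \<le> 3 * real M + 1" using red_fst_range[of p3 i3 y3] p i by (auto simp: q_def)
  have fa: "fst a < 3 * real p1 + 1" using redpt_fst_lt[OF i(1)] by (simp add: a_def)
  have fa': "3 * real p1 + 3 \<le> fst a'"
  proof -
    have "3 * real p1 + 3 \<le> 3 * real p2" using p by simp
    then show ?thesis using redpt_fst_ge[of p2 i2 y] by (simp add: a'_def)
  qed
  have key: "(3 * real p1 + 2, real y + t * (real y3 - real y)) \<in> convex hull {a, a', q}"
    if t: "0 \<le> t" "t \<le> dl" for t
  proof -
    have t1: "t \<le> 1" using t dl_small by simp
    have s1: "\<bar>t * (fst q - fst a)\<bar> < 1" by (rule shift_small) (use t ra rq in auto)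
    have s2: "\<bar>t * (fst q - fst a')\<bar> < 1" by (rule shift_small) (use t ra' rq in auto)
    show ?thesis
      using cross_pt[of a "{a, a', q}" a' q t "real y" "3 * real p1 + 2"] t t1 s1 s2 fa fa'
      by (auto simp: a_def a'_def q_def)
  qed
  have p1M: "p1 < M" using p by simp
  show ?thesis
  proof (cases "y < y3")
    case True
    define t where "t = dl / (real y3 - real y)"
    have d1: "1 \<le> real y3 - real y" using True by simp
    have t0: "0 \<le> t" using dl_pos d1 by (simp add: t_def)
    have tdl: "t \<le> dl" using dl_pos d1 by (simp add: t_def divide_simps)
    have e: "real y + t * (real y3 - real y) = yb y"
      using True y d1 by (simp add: t_def yb_def)
    have yD: "y < 2 * D" using True y by simp
    have "bluept p1 y \<in> Blue" using p yD p1M by (auto simp: blue_mem)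
    moreover have "bluept p1 y \<in> convex hull {a, a', q}"
      using key[OF t0 tdl] e by (simp add: bluept_def)
    ultimately show ?thesis by (auto simp: a_def a'_def q_def)
  next
    case False
    then have lt: "y3 < y" using y by simp
    define t where "t = dl / (real y - real y3)"
    have d1: "1 \<le> real y - real y3" using lt by simp
    have t0: "0 \<le> t" using dl_pos d1 by (simp add: t_def)
    have tdl: "t \<le> dl" using dl_pos d1 by (simp add: t_def divide_simps)
    define j where "j = D + (y - 1)"
    have j2: "j < 2 * D" using lt y by (simp add: j_def)
    have nj: "\<not> j < D" "j - D = y - 1" by (simp_all add: j_def)
    have y1: "1 \<le> y" using lt by simp
    have ybj: "yb j = real y - dl" using nj y1 by (simp add: yb_def of_nat_diff)
    have e: "real y + t * (real y3 - real y) = yb j"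
    proof -
      have "t * (real y3 - real y) = - dl" using d1 by (simp add: t_def divide_simps algebra_simps)
      then show ?thesis using ybj by simp
    qed
    have "bluept p1 j \<in> Blue" using p j2 p1M by (auto simp: blue_mem)
    moreover have "bluept p1 j \<in> convex hull {a, a', q}"
      using key[OF t0 tdl] e by (simp add: bluept_def)
    ultimately show ?thesis by (auto simp: a_def a'_def q_def)
  qed
qed


end

context cons begin
lemma colr0: "z \<in> SS \<Longrightarrow> colr z = 0 \<Longrightarrow> z \<in> Red"
  by (auto simp: SS_def blue_mem colr_blue)

lemma colrS: "z \<in> SS \<Longrightarrow> colr z = Suc j \<Longrightarrow> \<exists>q. 1 \<le> q \<and> q < M \<and> j < 2 * D \<and> z = bluept q j"
  by (auto simp: SS_def blue_mem colr_blue red_mem)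

lemma hull_strip_vert:
  assumes "1 \<le> m" "j < 2 * D"
  shows "(3 * real m, yb j) \<in> convex hull (strip m)"
proof -
  have a: "redpt m 0 (yl j) \<in> strip m" unfolding strip_mem
    by (intro exI[of _ 0] exI[of _ "yl j"]) (use yl_lt[OF assms(2)] in auto)
  have b: "redpt m 0 (Suc (yl j)) \<in> strip m" unfolding strip_mem
    by (intro exI[of _ 0] exI[of _ "Suc (yl j)"]) (use yl_lt[OF assms(2)] in auto)
  have "(3 * real m, yb j) \<in> closed_segment (redpt m 0 (yl j)) (redpt m 0 (Suc (yl j)))"
    by (rule vert_seg) (use yb_between[OF assms(2)] in \<open>auto simp: redpt_0 less_eq_real_def\<close>)
  then show ?thesis using seg_in_hull[OF a b] by blast
qed

lemma blue_block:
  assumes "bluept q1 j \<in> J" "bluept q2 j \<in> J" "q1 < m" "m \<le> q2" "j < 2 * D"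
  shows "(3 * real m, yb j) \<in> convex hull J \<inter> convex hull (strip m)"
proof -
  have "(3 * real m, yb j) \<in> closed_segment (bluept q1 j) (bluept q2 j)"
    by (rule horiz_seg) (use assms in \<open>auto simp: bluept_def\<close>)
  then have "(3 * real m, yb j) \<in> convex hull J" using seg_in_hull[OF assms(1,2)] by blast
  moreover have "(3 * real m, yb j) \<in> convex hull (strip m)"
    using hull_strip_vert assms by simp
  ultimately show ?thesis by blast
qed

lemma red_block:
  assumes "a \<in> J" "a' \<in> J" "a \<in> strip p1" "a' \<in> strip p2" "snd a = snd a'" "p1 < m" "m \<le> p2"
  shows "convex hull J \<inter> convex hull (strip m) \<noteq> {}"
proof -
  obtain i y where a: "i < rr p1" "y \<le> D" "a = redpt p1 i y" using assms(3) by (auto simp: strip_mem)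
  obtain i' y' where a': "i' < rr p2" "y' \<le> D" "a' = redpt p2 i' y'" using assms(4) by (auto simp: strip_mem)
  have sa: "snd a = real y" using a(3) by simp
  have sa': "snd a' = real y" using assms(5) sa by simp
  have f1: "fst a \<le> 3 * real m"
  proof -
    have "fst a < 3 * real p1 + 1" unfolding a(3) by (rule redpt_fst_lt[OF a(1)])
    moreover have "3 * real p1 + 1 \<le> 3 * real m" using assms(6) by simp
    ultimately show ?thesis by simp
  qed
  have f2: "3 * real m \<le> fst a'"
  proof -
    have "3 * real m \<le> 3 * real p2" using assms(7) by simp
    moreover have "3 * real p2 \<le> fst a'" unfolding a'(3) by (rule redpt_fst_ge)
    ultimately show ?thesis by simp
  qed
  have "(3 * real m, real y) \<in> closed_segment a a'"
    by (rule horiz_seg[OF sa sa' f1 f2])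
  then have "(3 * real m, real y) \<in> convex hull J" using seg_in_hull[OF assms(1,2)] by blast
  moreover have "redpt m 0 y \<in> strip m" unfolding strip_mem
    by (intro exI[of _ 0] exI[of _ y]) (use a(2) in simp)
  then have "(3 * real m, real y) \<in> strip m" by (simp add: redpt_0)
  then have "(3 * real m, real y) \<in> convex hull (strip m)" by (rule hull_inc)
  ultimately show ?thesis by blast
qed

end

context cons begin

lemma mono_cases:
  assumes J: "J \<subseteq> SS" "monochromatic colr J" "z0 \<in> J"
  shows "(J \<subseteq> Red) \<or> (\<exists>j<2*D. \<forall>z\<in>J. \<exists>q. 1 \<le> q \<and> q < M \<and> z = bluept q j)"
proof -
  have mc: "colr z = colr z0" if "z \<in> J" for z
    using J(2) J(3) that unfolding monochromatic_def by blast
  show ?thesis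
  proof (cases "colr z0")
    case 0
    have "z \<in> Red" if "z \<in> J" for z
    proof (rule colr0)
      show "z \<in> SS" using that J(1) by blast
      show "colr z = 0" using mc[OF that] 0 by simp
    qed
    then show ?thesis by blast
  next
    case (Suc j)
    have z0S: "z0 \<in> SS" using J by blast
    obtain q0 where "j < 2 * D" using colrS[OF z0S Suc] by blast
    moreover have "\<exists>q. 1 \<le> q \<and> q < M \<and> z = bluept q j" if "z \<in> J" for z
    proof -
      have "z \<in> SS" using that J(1) by blast
      moreover have "colr z = Suc j" using mc[OF that] Suc by simp
      ultimately show ?thesis using colrS by blast
    qed
    ultimately show ?thesis by blast
  qed
qed

lemma cand_bound:
  assumes hP: "\<And>p. 1 \<le> p \<Longrightarrow> p \<le> M \<Longrightarrow> h < tz p \<Longrightarrow> p \<in> Pk"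
    and hD: "h \<le> D"
    and J: "J \<subseteq> SS" "convex hull J \<inter> SS = J" "monochromatic colr J"
    and dis: "\<And>p. p \<in> Pk \<Longrightarrow> convex hull J \<inter> convex hull (strip p) = {}"
  shows "card J \<le> (D + 1) * 2 ^ h"
proof (cases "J = {}")
  case True then show ?thesis by simp
next
  case False
  then obtain z0 where z0: "z0 \<in> J" by blast
  have finJ: "finite J" using J(1) finite_SS finite_subset by blast
  have nojs: "z \<notin> strip p" if "p \<in> Pk" "z \<in> J" for p z
  proof
    assume "z \<in> strip p"
    then have "z \<in> convex hull (strip p)" by (rule hull_inc)
    moreover have "z \<in> convex hull J" using that(2) by (rule hull_inc)
    ultimately show False using dis[OF that(1)] by blast
  qed
  have unp: "rr p \<le> 2 ^ h" if "z \<in> J" "z \<in> strip p" "1 \<le> p" "p \<le> M" for p z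
  proof -
    have "p \<notin> Pk" using nojs that by blast
    then have "tz p \<le> h" using hP that by force
    then show ?thesis by (simp add: rr_def power_increasing)
  qed
  have two: "2 ^ Suc h \<le> (D + 1) * (2::nat) ^ h" using D1 by simp
  consider (red) "J \<subseteq> Red" | (blue) j where "j < 2 * D" "\<forall>z\<in>J. \<exists>q. 1 \<le> q \<and> q < M \<and> z = bluept q j"
    using mono_cases[OF J(1) J(3) z0] by blast
  then show ?thesis
  proof cases
    case red
    have hbl: "b \<notin> convex hull J" if "b \<in> Blue" for b
    proof
      assume "b \<in> convex hull J"
      then have "b \<in> J" using J(2) that by (auto simp: SS_def)
      then show False using red that red_blue_disj by blast
    qed
    show ?thesis
    proof (cases "\<exists>z1\<in>J. \<exists>z2\<in>J. snd z1 \<noteq> snd z2")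
      case True
      define Jy where "Jy y = {z\<in>J. snd z = real y}" for y
      have cJy: "card (Jy y) \<le> 2 ^ h" if "y \<le> D" for y
      proof (cases "Jy y = {}")
        case True then show ?thesis by simp
      next
        case False
        then obtain a0 where a0: "a0 \<in> J" "snd a0 = real y" by (auto simp: Jy_def)
        obtain p0 i0 y0 where p0: "1 \<le> p0" "p0 \<le> M" "i0 < rr p0" "y0 \<le> D" "a0 = redpt p0 i0 y0"
          using subsetD[OF red a0(1)] unfolding red_mem by blast
        obtain q where q: "q \<in> J" "snd q \<noteq> real y" using True by metis
        obtain p3 i3 y3 where p3: "1 \<le> p3" "p3 \<le> M" "i3 < rr p3" "y3 \<le> D" "q = redpt p3 i3 y3"
          using subsetD[OF red q(1)] unfolding red_mem by blast
        have y0y: "y0 = y" using a0 p0 by simp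
        have y3y: "y3 \<noteq> y" using q p3 by auto
        have sub: "Jy y \<subseteq> strip p0"
        proof
          fix z assume z: "z \<in> Jy y"
          then have zJ: "z \<in> J" "snd z = real y" by (auto simp: Jy_def)
          obtain p i y' where pz: "1 \<le> p" "p \<le> M" "i < rr p" "y' \<le> D" "z = redpt p i y'"
            using subsetD[OF red zJ(1)] unfolding red_mem by blast
          have y'y: "y' = y" using zJ pz by simp
          have "p = p0"
          proof (rule ccontr)
            assume ne: "p \<noteq> p0"
            have "\<exists>b\<in>Blue. b \<in> convex hull {z, a0, q}"
            proof (cases "p < p0")
              case True
              then have "\<exists>b\<in>Blue. b \<in> convex hull {redpt p i y, redpt p0 i0 y, redpt p3 i3 y3}"
                using same_run[of p p0 p3 i i0 i3 y y3] pz p0 p3 y3y that by auto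
              then show ?thesis using pz p0 p3 y'y y0y by auto
            next
              case False
              then have "p0 < p" using ne by simp
              then have "\<exists>b\<in>Blue. b \<in> convex hull {redpt p0 i0 y, redpt p i y, redpt p3 i3 y3}"
                using same_run[of p0 p p3 i0 i i3 y y3] pz p0 p3 y3y that by auto
              then show ?thesis using pz p0 p3 y'y y0y by (auto simp: insert_commute)
            qed
            then obtain b where b: "b \<in> Blue" "b \<in> convex hull {z, a0, q}" by blast
            have "{z, a0, q} \<subseteq> J" using zJ a0 q by auto
            then have "convex hull {z, a0, q} \<subseteq> convex hull J" by (rule hull_mono)
            then show False using b hbl by blast
          qed
          then show "z \<in> strip p0" using pz y'y by (auto simp: strip_mem)
        qed
        have "card (Jy y) \<le> rr p0"
          by (rule card_row_strip[OF sub]) (auto simp: Jy_def)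
        also have "rr p0 \<le> 2 ^ h"
        proof (rule unp[OF a0(1) _ p0(1,2)])
          show "a0 \<in> strip p0" using p0 by (auto simp: strip_mem)
        qed
        finally show ?thesis .
      qed
      have "J \<subseteq> (\<Union>y\<in>{..D}. Jy y)"
      proof
        fix z assume z: "z \<in> J"
        then obtain p i y where "y \<le> D" "z = redpt p i y" using subsetD[OF red z] unfolding red_mem by blast
        then show "z \<in> (\<Union>y\<in>{..D}. Jy y)" using z by (auto simp: Jy_def)
      qed
      then have "card J \<le> card (\<Union>y\<in>{..D}. Jy y)"
        by (rule card_mono[rotated]) (auto simp: Jy_def intro: finite_subset[OF _ finJ])
      also have "\<dots> \<le> (\<Sum>y\<in>{..D}. card (Jy y))" by (rule card_UN_le) simp
      also have "\<dots> \<le> (\<Sum>y\<in>{..D}. 2 ^ h)" by (rule sum_mono) (use cJy in auto)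
      also have "\<dots> = (D + 1) * 2 ^ h" by simp
      finally show ?thesis .
    next
      case False
      then have same: "\<forall>z1\<in>J. \<forall>z2\<in>J. snd z1 = snd z2" by blast
      define PJ where "PJ = {p\<in>{1..M}. J \<inter> strip p \<noteq> {}}"
      have finPJ: "finite PJ" by (simp add: PJ_def)
      have JU: "J \<subseteq> (\<Union>p\<in>PJ. J \<inter> strip p)"
      proof
        fix z assume z: "z \<in> J"
        then obtain p where "p \<in> {1..M}" "z \<in> strip p" using red by (auto simp: Red_def)
        then show "z \<in> (\<Union>p\<in>PJ. J \<inter> strip p)" using z by (auto simp: PJ_def)
      qed
      have PJne: "PJ \<noteq> {}" using JU z0 by blast
      define pm where "pm = Min PJ"
      have pm: "pm \<in> PJ" "\<And>p. p \<in> PJ \<Longrightarrow> pm \<le> p" using finPJ PJne by (auto simp: pm_def)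
      have block: "m \<notin> Pk" if bb: "p1 \<in> PJ" "p2 \<in> PJ" "p1 < m" "m \<le> p2" for p1 p2 m
      proof
        assume mP: "m \<in> Pk"
        obtain a where a: "a \<in> J" "a \<in> strip p1" using bb(1) unfolding PJ_def by blast
        obtain a' where a': "a' \<in> J" "a' \<in> strip p2" using bb(2) unfolding PJ_def by blast
        have "convex hull J \<inter> convex hull (strip m) \<noteq> {}"
        proof (rule red_block[OF a(1) a'(1) a(2) a'(2) _ bb(3,4)])
          show "snd a = snd a'" using same a(1) a'(1) by blast
        qed
        then show False using dis[OF mP] by simp
      qed
      define H where "H = (2::nat) ^ Suc h"
      have H0: "0 < H" by (simp add: H_def)
      define base where "base = H * (pm div H)"
      have pmP: "pm \<notin> Pk" using pm(1) nojs by (auto simp: PJ_def)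
      have pm1: "1 \<le> pm" "pm \<le> M" using pm(1) by (auto simp: PJ_def)
      have ndvd: "\<not> H dvd pm"
      proof
        assume "H dvd pm"
        then have "Suc h \<le> tz pm" using tz_ge[of pm "Suc h"] pm1 by (simp add: H_def)
        then show False using hP[OF pm1] pmP by simp
      qed
      have base_le: "base \<le> pm" by (simp add: base_def)
      have base_lt: "base < pm"
      proof -
        have "base \<noteq> pm" using ndvd unfolding base_def by (metis dvd_triv_left)
        then show ?thesis using base_le by simp
      qed
      have pm_lt: "pm < base + H"
      proof -
        have "pm = base + pm mod H" by (simp add: base_def)
        moreover have "pm mod H < H" using H0 by simp
        ultimately show ?thesis by linarith
      qed
      have PJsub: "PJ \<subseteq> {base<..<base + H}"
      proof
        fix p assume p: "p \<in> PJ"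
        have "base < p" using base_lt pm(2)[OF p] by simp
        moreover have "p < base + H"
        proof (rule ccontr)
          assume "\<not> p < base + H"
          then have le: "base + H \<le> p" by simp
          have pM: "p \<le> M" using p by (auto simp: PJ_def)
          have "H dvd base + H" by (simp add: base_def)
          then have "2 ^ Suc h dvd base + H" by (simp only: H_def)
          then have "Suc h \<le> tz (base + H)" using tz_ge[of "base + H" "Suc h"] H0 by linarith
          then have "h < tz (base + H)" by simp
          moreover have "1 \<le> base + H" using H0 by linarith
          moreover have "base + H \<le> M" using le pM by linarith
          ultimately have "base + H \<in> Pk" using hP by blast
          moreover have "base + H \<notin> Pk" using block[OF pm(1) p pm_lt le] .
          ultimately show False by simp
        qed
        ultimately show "p \<in> {base<..<base + H}" by simp
      qed
      have "card J \<le> card (\<Union>p\<in>PJ. J \<inter> strip p)"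
        by (rule card_mono[OF _ JU]) (simp add: finPJ)
      also have "\<dots> \<le> (\<Sum>p\<in>PJ. card (J \<inter> strip p))" by (rule card_UN_le[OF finPJ])
      also have "\<dots> \<le> (\<Sum>p\<in>PJ. 2 ^ tz p)"
      proof (rule sum_mono)
        fix p assume "p \<in> PJ"
        have "card (J \<inter> strip p) \<le> rr p"
        proof (rule card_row_strip[where c="snd z0"])
          show "J \<inter> strip p \<subseteq> strip p" by blast
          show "\<forall>z\<in>J \<inter> strip p. snd z = snd z0" using same z0 by blast
        qed
        then show "card (J \<inter> strip p) \<le> 2 ^ tz p" by (simp add: rr_def)
      qed
      also have "\<dots> \<le> (\<Sum>p\<in>{base<..<base + H}. 2 ^ tz p)"
        by (rule sum_mono2[OF _ PJsub]) auto
      also have "\<dots> = (Suc h) * 2 ^ h"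
      proof -
        have "H dvd base" by (simp add: base_def)
        then have "2 * (\<Sum>p\<in>{base<..<base + H}. (2::nat) ^ tz p) = Suc h * 2 ^ Suc h"
          unfolding H_def by (rule tz_sum)
        then show ?thesis by simp
      qed
      also have "\<dots> \<le> (D + 1) * 2 ^ h" using hD by simp
      finally show ?thesis .
    qed
  next
    case blue
    define Q where "Q = {q\<in>{1..<M}. bluept q j \<in> J}"
    have finQ: "finite Q" by (simp add: Q_def)
    have JQ: "J \<subseteq> (\<lambda>q. bluept q j) ` Q" using blue(2) by (auto simp: Q_def)
    have QJ: "\<And>q. q \<in> Q \<Longrightarrow> bluept q j \<in> J" by (simp add: Q_def)
    have Qne: "Q \<noteq> {}" using JQ z0 by blast
    define qm where "qm = Min Q"
    have qm: "qm \<in> Q" "\<And>q. q \<in> Q \<Longrightarrow> qm \<le> q" using finQ Qne by (auto simp: qm_def)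
    define H where "H = (2::nat) ^ Suc h"
    have H0: "0 < H" by (simp add: H_def)
    have Qsub: "Q \<subseteq> {qm..<qm + H}"
    proof
      fix q assume q: "q \<in> Q"
      have "q < qm + H"
      proof (rule ccontr)
        assume "\<not> q < qm + H"
        then have le: "qm + H \<le> q" by simp
        define m where "m = H * (qm div H + 1)"
        have m1: "qm < m"
        proof -
          have "H * (qm div H) + qm mod H = qm" by (rule mult_div_mod_eq)
          moreover have "qm mod H < H" using H0 by simp
          moreover have "m = H * (qm div H) + H" by (simp add: m_def algebra_simps)
          ultimately show ?thesis by linarith
        qed
        have m2: "m \<le> qm + H"
        proof -
          have "H * (qm div H) \<le> qm" by simp
          then show ?thesis by (simp add: m_def algebra_simps)
        qed
        have qM: "q < M" using q by (simp add: Q_def)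
        have "H dvd m" by (simp add: m_def)
        then have "Suc h \<le> tz m" using tz_ge[of m "Suc h"] m1 by (simp add: H_def)
        then have mP: "m \<in> Pk" using hP[of m] m1 m2 le qM by simp
        have "(3 * real m, yb j) \<in> convex hull J \<inter> convex hull (strip m)"
          by (rule blue_block[OF QJ[OF qm(1)] QJ[OF q] m1 _ blue(1)]) (use m2 le in simp)
        then show False using dis[OF mP] by simp
      qed
      then show "q \<in> {qm..<qm + H}" using qm(2)[OF q] by simp
    qed
    have "card J \<le> card ((\<lambda>q. bluept q j) ` Q)" by (rule card_mono[OF _ JQ]) (simp add: finQ)
    also have "\<dots> \<le> card Q" by (rule card_image_le[OF finQ])
    also have "\<dots> \<le> card {qm..<qm + H}" by (rule card_mono[OF _ Qsub]) simp
    also have "\<dots> = H" by simp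
    also have "\<dots> \<le> (D + 1) * 2 ^ h" using two by (simp add: H_def)
    finally show ?thesis .
  qed
qed


lemma cand_bound_all:
  assumes hP: "\<And>p. 1 \<le> p \<Longrightarrow> p \<le> M \<Longrightarrow> p \<in> Pk"
    and J: "J \<subseteq> SS" "convex hull J \<inter> SS = J" "monochromatic colr J"
    and dis: "\<And>p. p \<in> Pk \<Longrightarrow> convex hull J \<inter> convex hull (strip p) = {}"
  shows "card J \<le> 1"
proof (cases "J = {}")
  case True then show ?thesis by simp
next
  case False
  then obtain z0 where z0: "z0 \<in> J" by blast
  have finJ: "finite J" using J(1) finite_SS finite_subset by blast
  have nojs: "z \<notin> strip p" if "p \<in> Pk" "z \<in> J" for p z
  proof
    assume "z \<in> strip p"
    then have "z \<in> convex hull (strip p)" by (rule hull_inc)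
    moreover have "z \<in> convex hull J" using that(2) by (rule hull_inc)
    ultimately show False using dis[OF that(1)] by blast
  qed
  consider (red) "J \<subseteq> Red" | (blue) j where "j < 2 * D" "\<forall>z\<in>J. \<exists>q. 1 \<le> q \<and> q < M \<and> z = bluept q j"
    using mono_cases[OF J(1) J(3) z0] by blast
  then show ?thesis
  proof cases
    case red
    have "z0 \<in> Red" using red z0 by blast
    then obtain p where p: "1 \<le> p" "p \<le> M" "z0 \<in> strip p" unfolding Red_def by auto
    then show ?thesis using nojs[OF hP[OF p(1,2)] z0] by simp
  next
    case blue
    have "\<forall>a1\<in>J. \<forall>a2\<in>J. a1 = a2"
    proof (intro ballI)
      fix a1 a2 assume a: "a1 \<in> J" "a2 \<in> J"
      obtain q1 where q1: "1 \<le> q1" "q1 < M" "a1 = bluept q1 j" using blue(2) a(1) by blast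
      obtain q2 where q2: "1 \<le> q2" "q2 < M" "a2 = bluept q2 j" using blue(2) a(2) by blast
      have "\<not> q1 < q2" if b1: "bluept q1 j \<in> J" "bluept q2 j \<in> J" "1 \<le> q1" "q2 < M" for q1 q2
      proof
        assume lt: "q1 < q2"
        have "(3 * real (Suc q1), yb j) \<in> convex hull J \<inter> convex hull (strip (Suc q1))"
          by (rule blue_block[OF b1(1) b1(2) _ _ blue(1)]) (use lt in auto)
        moreover have "Suc q1 \<in> Pk" using hP b1 lt by simp
        ultimately show False using dis by blast
      qed
      then have "\<not> q1 < q2" "\<not> q2 < q1" using q1 q2 a by blast+
      then show "a1 = a2" using q1 q2 by simp
    qed
    then show ?thesis using finJ card_le_Suc0_iff_eq by auto
  qed
qed

end

context cons begin

definition ord :: "nat list" where "ord = sort_key (\<lambda>p. D - tz p) [1..<Suc M]"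
definition blist :: "(real \<times> real) list" where
  "blist = map (\<lambda>(q, j). bluept q j) (List.product [1..<M] [0..<2 * D])"
definition Isl :: "(real \<times> real) set list" where
  "Isl = map strip ord @ map (\<lambda>b. {b}) blist"

lemma ord_set: "set ord = {1..M}" unfolding ord_def by auto
lemma ord_dist: "distinct ord" by (simp add: ord_def)
lemma ord_len: "length ord = M" by (simp add: ord_def length_sort)

lemma ord_in: "i < M \<Longrightarrow> 1 \<le> ord ! i \<and> ord ! i \<le> M"
proof -
  assume "i < M"
  then have "ord ! i \<in> set ord" using ord_len by simp
  then show ?thesis using ord_set by simp
qed

lemma ord_mono: "i < j \<Longrightarrow> j < M \<Longrightarrow> tz (ord ! j) \<le> tz (ord ! i)"
proof -
  assume ij: "i < j" "j < M"
  have s: "sorted (map (\<lambda>p. D - tz p) ord)" unfolding ord_def by (rule sorted_sort_key)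
  have jl: "j < length (map (\<lambda>p. D - tz p) ord)" using ij ord_len by simp
  have "(map (\<lambda>p. D - tz p) ord) ! i \<le> (map (\<lambda>p. D - tz p) ord) ! j"
    by (rule sorted_nth_mono[OF s]) (use ij jl in auto)
  then have "D - tz (ord ! i) \<le> D - tz (ord ! j)" using ij ord_len by simp
  moreover have "tz (ord ! i) \<le> D"
    using ord_in[of i] ij by (intro tz_le_M) auto
  moreover have "tz (ord ! j) \<le> D"
    using ord_in[of j] ij by (intro tz_le_M) auto
  ultimately show ?thesis by linarith
qed

lemma ord_prefix:
  assumes "j < M" "1 \<le> p" "p \<le> M" "tz (ord ! j) < tz p"
  shows "p \<in> set (take j ord)"
proof -
  have "p \<in> set ord" using assms ord_set by simp
  then obtain i where i: "i < M" "ord ! i = p" using ord_len by (metis in_set_conv_nth)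
  have "i < j"
  proof (rule ccontr)
    assume "\<not> i < j"
    then have "j \<le> i" by simp
    then have "tz p \<le> tz (ord ! j)"
      using ord_mono[of j i] i by (cases "j = i") auto
    then show False using assms by simp
  qed
  then show ?thesis using i ord_len by (auto simp: in_set_conv_nth)
qed

lemma ord_notin: "j < M \<Longrightarrow> ord ! j \<notin> set (take j ord)"
proof
  assume j: "j < M" and "ord ! j \<in> set (take j ord)"
  then obtain i where i: "i < j" "take j ord ! i = ord ! j" by (auto simp: in_set_conv_nth)
  then have "ord ! i = ord ! j" by simp
  then have "i = j" using ord_dist j i ord_len by (simp add: nth_eq_iff_index_eq)
  then show False using i by simp
qed

lemma take_ord_sub: "set (take j ord) \<subseteq> {1..M}"
  using set_take_subset[of j ord] unfolding ord_set .

lemma blist_set: "set blist = Blue"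
proof -
  have "set blist = (\<lambda>(q, j). bluept q j) ` ({1..<M} \<times> {..<2 * D})"
    unfolding blist_def set_map set_product by (simp add: lessThan_atLeast0)
  then show ?thesis using Blue_image by simp
qed

lemma blist_dist: "distinct blist"
proof -
  have "inj_on (\<lambda>(q, j). bluept q j) (set (List.product [1..<M] [0..<2 * D]))"
    by (auto simp: inj_on_def bluept_def dest: yb_inj)
  then show ?thesis by (simp add: blist_def distinct_map distinct_product)
qed

lemma blist_len: "length blist = (M - 1) * (2 * D)" by (simp add: blist_def)

lemma Isl_len: "length Isl = M + (M - 1) * (2 * D)"
  by (simp add: Isl_def ord_len blist_len)

lemma strip_disj_set: "p \<noteq> p' \<Longrightarrow> strip p \<inter> strip p' = {}"
  using strip_hull_disj[of p p'] hull_subset[of "strip p" convex] hull_subset[of "strip p'" convex] by blast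

end


lemma nth_notin_take: "distinct xs \<Longrightarrow> k < length xs \<Longrightarrow> xs ! k \<notin> set (take k xs)"
proof
  assume d: "distinct xs" and k: "k < length xs" and "xs ! k \<in> set (take k xs)"
  then obtain i where i: "i < k" "take k xs ! i = xs ! k" by (auto simp: in_set_conv_nth)
  then have "xs ! i = xs ! k" by simp
  then have "i = k" using d k i by (simp add: nth_eq_iff_index_eq)
  then show False using i by simp
qed

context cons begin

lemma red_step:
  assumes j: "j < M"
  shows "\<Union>(set (take j Isl)) \<noteq> SS \<and> greedy_candidate SS colr (take j Isl) (Isl ! j) \<and>
        (\<forall>J. greedy_candidate SS colr (take j Isl) J \<longrightarrow>
              card (J - \<Union>(set (take j Isl))) \<le> card (Isl ! j - \<Union>(set (take j Isl))))"
proof -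
  define p where "p = ord ! j"
  define Pk where "Pk = set (take j ord)"
  have tI: "take j Isl = map strip (take j ord)"
    using j by (simp add: Isl_def ord_len take_map)
  have nI: "Isl ! j = strip p"
    using j by (simp add: Isl_def ord_len nth_append p_def)
  have pM: "1 \<le> p" "p \<le> M" using ord_in[OF j] by (simp_all add: p_def)
  have pPk: "p \<notin> Pk" using ord_notin[OF j] by (simp add: p_def Pk_def)
  have PkM: "Pk \<subseteq> {1..M}" using take_ord_sub by (simp add: Pk_def)
  define U where "U = \<Union>(set (take j Isl))"
  have U: "U = (\<Union>p'\<in>Pk. strip p')" by (simp add: U_def tI Pk_def)
  have sd: "strip p \<inter> strip p' = {}" if "p' \<in> Pk" for p'
    by (rule strip_disj_set) (use pPk that in blast)
  have sU: "strip p \<inter> U = {}"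
    unfolding U using sd by blast
  have in1: "redpt p 0 0 \<in> strip p" unfolding strip_mem by (intro exI[of _ 0] exI[of _ 0]) simp
  have sSS: "strip p \<subseteq> SS" using strip_sub_Red[OF pM] by (auto simp: SS_def)
  have c1: "U \<noteq> SS" using in1 sU sSS by blast
  have c2: "greedy_candidate SS colr (take j Isl) (strip p)"
    unfolding greedy_candidate_def
  proof (intro conjI ballI)
    show "monochromatic colr (strip p)"
      unfolding monochromatic_def by (auto simp: strip_mem)
    show "island SS (strip p)" unfolding island_def using sSS island_strip[OF pM] by simp
    fix I assume "I \<in> set (take j Isl)"
    then obtain p' where "p' \<in> Pk" "I = strip p'" by (auto simp: tI Pk_def)
    then show "convex hull strip p \<inter> convex hull I = {}"
      using strip_hull_disj pPk by metis
  qed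
  have c3: "card (J - U) \<le> card (strip p - U)" if Jc: "greedy_candidate SS colr (take j Isl) J" for J
  proof -
    have mono: "monochromatic colr J" and isl: "island SS J"
      and dJ: "\<forall>I\<in>set (take j Isl). convex hull J \<inter> convex hull I = {}"
      using Jc unfolding greedy_candidate_def by auto
    have JS: "J \<subseteq> SS" "convex hull J \<inter> SS = J" using isl unfolding island_def by auto
    have dis: "convex hull J \<inter> convex hull (strip p') = {}" if "p' \<in> Pk" for p'
      using dJ that by (auto simp: tI Pk_def)
    have hP: "p' \<in> Pk" if "1 \<le> p'" "p' \<le> M" "tz p < tz p'" for p'
      using ord_prefix[OF j that(1,2)] that(3) by (simp add: p_def Pk_def)
    have cb: "card J \<le> (D + 1) * 2 ^ tz p"
      by (rule cand_bound[OF hP tz_le_M[OF pM] JS(1) JS(2) mono dis])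
    have finJ: "finite J" using JS(1) finite_SS finite_subset by blast
    have "card (J - U) \<le> card J" using finJ by (simp add: card_mono)
    also have "\<dots> \<le> (D + 1) * 2 ^ tz p" by (rule cb)
    also have "\<dots> = card (strip p)" by (simp add: card_strip rr_def)
    also have "\<dots> = card (strip p - U)" using sU by (simp add: Diff_triv)
    finally show ?thesis .
  qed
  show ?thesis using c1 c2 c3 by (simp add: nI U_def)
qed


lemma Red_ord: "(\<Union>p\<in>set ord. strip p) = Red" by (simp add: ord_set Red_def)

lemma blue_step:
  assumes j: "M \<le> j" "j < length Isl"
  shows "\<Union>(set (take j Isl)) \<noteq> SS \<and> greedy_candidate SS colr (take j Isl) (Isl ! j) \<and>
        (\<forall>J. greedy_candidate SS colr (take j Isl) J \<longrightarrow>
              card (J - \<Union>(set (take j Isl))) \<le> card (Isl ! j - \<Union>(set (take j Isl))))"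
proof -
  define k where "k = j - M"
  have k: "k < length blist" using j by (simp add: k_def Isl_len blist_len)
  define b where "b = blist ! k"
  have tI: "take j Isl = map strip ord @ map (\<lambda>b. {b}) (take k blist)"
    using j by (simp add: Isl_def ord_len take_map k_def)
  have "Isl ! j = map (\<lambda>b. {b}) blist ! (j - M)"
    using j(1) unfolding Isl_def by (simp add: nth_append ord_len)
  then have nI: "Isl ! j = {b}" using k by (simp add: b_def k_def)
  have "blist ! k \<in> set blist" using k by (rule nth_mem)
  then have bB: "b \<in> Blue" using blist_set by (simp add: b_def)
  have bnt: "b \<notin> set (take k blist)" using nth_notin_take[OF blist_dist k] by (simp add: b_def)
  define U where "U = \<Union>(set (take j Isl))"
  have U: "U = Red \<union> set (take k blist)" unfolding U_def tI using Red_ord by auto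
  have bR: "b \<notin> Red" using bB red_blue_disj by blast
  have bU: "b \<notin> U" using bR bnt U by blast
  have bS: "b \<in> SS" using bB by (simp add: SS_def)
  have c1: "U \<noteq> SS" using bU bS by blast
  have c2: "greedy_candidate SS colr (take j Isl) {b}"
    unfolding greedy_candidate_def
  proof (intro conjI ballI)
    show "monochromatic colr {b}" unfolding monochromatic_def by simp
    show "island SS {b}" unfolding island_def using bS by simp
    fix I assume "I \<in> set (take j Isl)"
    then consider (s) p where "p \<in> set ord" "I = strip p" | (t) b' where "b' \<in> set (take k blist)" "I = {b'}"
      unfolding tI by auto
    then show "convex hull {b} \<inter> convex hull I = {}"
    proof cases
      case s
      then show ?thesis using blue_not_hull_strip[OF bB, of p] by simp
    next
      case t
      then have "b' \<noteq> b" using bnt by blast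
      then show ?thesis using t by simp
    qed
  qed
  have c3: "card (J - U) \<le> card ({b} - U)" if Jc: "greedy_candidate SS colr (take j Isl) J" for J
  proof -
    have mono: "monochromatic colr J" and isl: "island SS J"
      and dJ: "\<forall>I\<in>set (take j Isl). convex hull J \<inter> convex hull I = {}"
      using Jc unfolding greedy_candidate_def by auto
    have JS: "J \<subseteq> SS" "convex hull J \<inter> SS = J" using isl unfolding island_def by auto
    have dis: "convex hull J \<inter> convex hull (strip p') = {}" if "p' \<in> set ord" for p'
      using dJ that unfolding tI by simp
    have hP: "p' \<in> set ord" if "1 \<le> p'" "p' \<le> M" for p' using that ord_set by simp
    have cb: "card J \<le> 1"
      by (rule cand_bound_all[OF hP JS(1) JS(2) mono dis])
    have finJ: "finite J" using JS(1) finite_SS finite_subset by blast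
    have "card (J - U) \<le> card J" using finJ by (simp add: card_mono)
    also have "\<dots> \<le> 1" by (rule cb)
    also have "\<dots> = card ({b} - U)" using bU by (simp add: insert_Diff_if)
    finally show ?thesis .
  qed
  show ?thesis using c1 c2 c3 by (simp add: nI U_def)
qed

lemma Isl_union: "\<Union>(set Isl) = SS"
proof -
  have "\<Union>(set Isl) = (\<Union>p\<in>set ord. strip p) \<union> set blist" by (auto simp: Isl_def)
  then show ?thesis using Red_ord blist_set by (simp add: SS_def)
qed

lemma greedy: "greedy_run SS colr Isl"
  unfolding greedy_run_def
proof (rule conjI[OF allI[OF impI] Isl_union])
  fix j assume j: "j < length Isl"
  show "\<Union>(set (take j Isl)) \<noteq> SS \<and> greedy_candidate SS colr (take j Isl) (Isl ! j) \<and>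
        (\<forall>J. greedy_candidate SS colr (take j Isl) J \<longrightarrow>
              card (J - \<Union>(set (take j Isl))) \<le> card (Isl ! j - \<Union>(set (take j Isl))))"
  proof (cases "j < M")
    case True then show ?thesis by (rule red_step)
  next
    case False then show ?thesis using blue_step j by simp
  qed
qed

end

context cons begin

definition Cset :: "real set" where "Cset = real ` {..D} \<union> yb ` {..<2 * D}"
definition rowP :: "(real \<times> real) set set" where "rowP = (\<lambda>c. SS \<inter> {z. snd z = c}) ` Cset"

lemma rowP_part: "island_partition SS colr rowP"
  unfolding island_partition_def
proof (intro conjI ballI impI)
  show "finite rowP" by (simp add: rowP_def Cset_def)
  show "\<Union>rowP = SS"
  proof (intro equalityI subsetI)
    fix z assume "z \<in> \<Union>rowP" then show "z \<in> SS" by (auto simp: rowP_def)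
  next
    fix z assume z: "z \<in> SS"
    have "snd z \<in> Cset"
    proof (cases "z \<in> Red")
      case True
      then obtain p i y where "y \<le> D" "z = redpt p i y" unfolding red_mem by blast
      then show ?thesis by (simp add: Cset_def)
    next
      case False
      then have "z \<in> Blue" using z by (simp add: SS_def)
      then obtain q j where "j < 2 * D" "z = bluept q j" unfolding blue_mem by blast
      then show ?thesis by (simp add: Cset_def bluept_def)
    qed
    then show "z \<in> \<Union>rowP" using z by (auto simp: rowP_def)
  qed
  show "{} \<notin> rowP"
  proof
    assume "{} \<in> rowP"
    then obtain c where c: "c \<in> Cset" "SS \<inter> {z. snd z = c} = {}" by (auto simp: rowP_def)
    show False
    proof (cases "c \<in> real ` {..D}")
      case True
      then obtain y where y: "y \<le> D" "c = real y" by auto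
      have "redpt 1 0 y \<in> strip 1" unfolding strip_mem using y by (intro exI[of _ 0] exI[of _ y]) simp
      moreover have "strip 1 \<subseteq> SS" using strip_sub_Red[of 1] M_ge by (auto simp: SS_def)
      ultimately show False using c y by auto
    next
      case False
      then obtain j where j: "j < 2 * D" "c = yb j" using c(1) by (auto simp: Cset_def)
      have "bluept 1 j \<in> Blue" unfolding blue_mem using j M_ge by (intro exI[of _ 1] exI[of _ j]) simp
      then have "bluept 1 j \<in> SS" by (simp add: SS_def)
      then show False using c j by (auto simp: bluept_def)
    qed
  qed
  fix I assume I: "I \<in> rowP"
  then obtain c where c: "I = SS \<inter> {z. snd z = c}" by (auto simp: rowP_def)
  show "monochromatic colr I" unfolding monochromatic_def c colr_def by simp
  have hl: "convex hull I \<subseteq> {z. snd z = c}" by (rule hull_line) (auto simp: c)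
  show "island SS I" unfolding island_def
  proof (intro conjI)
    show "I \<subseteq> SS" by (simp add: c)
    show "convex hull I \<inter> SS = I"
      using hl hull_subset[of I convex] by (auto simp: c)
  qed
  fix J assume J: "J \<in> rowP" and ne: "I \<noteq> J"
  then obtain c' where c': "J = SS \<inter> {z. snd z = c'}" by (auto simp: rowP_def)
  have hl': "convex hull J \<subseteq> {z. snd z = c'}" by (rule hull_line) (auto simp: c')
  have "c \<noteq> c'" using ne c c' by auto
  then show "convex hull I \<inter> convex hull J = {}" using hl hl' by auto
qed

lemma card_rowP: "card rowP \<le> 3 * D + 1"
proof -
  have "card rowP \<le> card Cset" unfolding rowP_def by (rule card_image_le) (simp add: Cset_def)
  also have "\<dots> \<le> card (real ` {..D}) + card (yb ` {..<2 * D})"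
    unfolding Cset_def by (rule card_Un_le)
  also have "\<dots> \<le> (D + 1) + 2 * D"
    using card_image_le[of "{..D}" real] card_image_le[of "{..<2*D}" yb] by simp
  finally show ?thesis by simp
qed

lemma Opt_le: "Opt_P SS colr \<le> 3 * D + 1"
proof -
  have fin: "finite {card P | P. island_partition SS colr P}"
  proof -
    have "{card P | P. island_partition SS colr P} \<subseteq> card ` Pow (Pow SS)"
      unfolding island_partition_def by auto
    then show ?thesis using finite_SS finite_subset by blast
  qed
  have "Opt_P SS colr \<le> card rowP"
    unfolding Opt_P_def by (rule Min_le[OF fin]) (use rowP_part in blast)
  then show ?thesis using card_rowP by simp
qed

lemma sum_rr: "(\<Sum>p\<in>{1..M}. rr p) = (D + 1) * 2 ^ D"
proof -
  have e: "{1..M} = {0<..<0 + 2 ^ Suc D}" using M1 by auto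
  have "2 * (\<Sum>p\<in>{0<..<0 + 2 ^ Suc D}. (2::nat) ^ tz p) = Suc D * 2 ^ Suc D"
    by (rule tz_sum) simp
  then show ?thesis unfolding e rr_def by simp
qed

lemma card_SS_le: "card SS \<le> (D + 1) * (D + 1) * 2 ^ D + (M - 1) * (2 * D)"
proof -
  have "card Red \<le> (\<Sum>p\<in>{1..M}. card (strip p))" unfolding Red_def by (rule card_UN_le) simp
  also have "\<dots> = (\<Sum>p\<in>{1..M}. rr p * (D + 1))" by (simp add: card_strip)
  also have "\<dots> = (D + 1) * (\<Sum>p\<in>{1..M}. rr p)" by (simp add: sum_distrib_left mult.commute)
  also have "\<dots> = (D + 1) * (D + 1) * 2 ^ D" unfolding sum_rr by (simp only: mult.assoc)
  finally have r: "card Red \<le> (D + 1) * (D + 1) * 2 ^ D" .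
  have b: "card Blue \<le> (M - 1) * (2 * D)"
    using card_length[of blist] blist_set blist_len by simp
  have "card SS \<le> card Red + card Blue" unfolding SS_def by (rule card_Un_le)
  then show ?thesis using r b by linarith
qed

lemma card_SS_ge: "(D + 1) * 2 ^ D \<le> card SS"
proof -
  have t: "tz (2 ^ D) = D" using tz_odd[of 1 D] by simp
  have p: "1 \<le> (2::nat) ^ D" "2 ^ D \<le> M" using M_ge by auto
  have "strip (2 ^ D) \<subseteq> SS" using strip_sub_Red[OF p] by (auto simp: SS_def)
  then have "card (strip (2 ^ D)) \<le> card SS" by (rule card_mono[OF finite_SS])
  moreover have "card (strip (2 ^ D)) = (D + 1) * 2 ^ D" by (simp add: card_strip rr_def t)
  ultimately show ?thesis by simp
qed

lemma colr_range: "colr ` SS \<subseteq> {..<2 * D + 1}"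
proof
  fix c assume "c \<in> colr ` SS"
  then obtain z where z: "z \<in> SS" "c = colr z" by auto
  show "c \<in> {..<2 * D + 1}"
  proof (cases "z \<in> Red")
    case True
    then obtain p i y where "z = redpt p i y" unfolding red_mem by blast
    then show ?thesis using z by simp
  next
    case False
    then have "z \<in> Blue" using z by (simp add: SS_def)
    then obtain q j where "j < 2 * D" "z = bluept q j" unfolding blue_mem by blast
    then show ?thesis using z colr_blue by simp
  qed
qed

end

context cons begin

lemma ln2_half: "1/2 \<le> ln (2::real)"
proof -
  have "ln (1/2::real) \<le> 1/2 - 1" by (rule ln_le_minus_one) simp
  moreover have "ln (1/2::real) = - ln 2" by (simp add: ln_div)
  ultimately show ?thesis by simp
qed

lemma final_ineq:
  "real (length Isl) \<ge> (1/128) * (real (card SS) / (ln (real (card SS)))\<^sup>2) * real (Opt_P SS colr)"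
proof -
  define X :: real where "X = 2 ^ D"
  define n where "n = real (card SS)"
  define d where "d = real D"
  have d1: "1 \<le> d" using D1 by (simp add: d_def)
  have X2: "2 \<le> X" using D1 unfolding X_def
    by (metis power_increasing power_one_right numeral_le_iff one_le_numeral semiring_norm(69) of_nat_numeral
         less_eq_real_def le_numeral_extra(4) one_le_power zero_le_numeral)
  have Mr: "real M = 2 * X - 1"
  proof -
    have "real (M + 1) = real (2 ^ Suc D)" using M1 by simp
    then show ?thesis by (simp add: X_def)
  qed
  have M1r: "real (M - 1) = 2 * X - 2" using Mr M_ge by (simp add: of_nat_diff)
  have nlo: "(d + 1) * X \<le> n"
  proof -
    have "real ((D + 1) * 2 ^ D) \<le> real (card SS)" using card_SS_ge by (simp only: of_nat_le_iff)
    then show ?thesis by (simp add: n_def X_def d_def algebra_simps)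
  qed
  have nhi: "n \<le> (d + 1) * (d + 1) * X + (2 * X - 2) * (2 * d)"
  proof -
    have "real (card SS) \<le> real ((D + 1) * (D + 1) * 2 ^ D + (M - 1) * (2 * D))"
      using card_SS_le by (simp only: of_nat_le_iff)
    also have "\<dots> = real ((D + 1) * (D + 1) * 2 ^ D) + real (M - 1) * real (2 * D)"
      by (simp only: of_nat_add of_nat_mult)
    also have "\<dots> = (d + 1) * (d + 1) * X + (2 * X - 2) * (2 * d)"
      unfolding M1r by (simp add: d_def X_def algebra_simps)
    finally show ?thesis by (simp add: n_def)
  qed
  have nhi2: "n \<le> 16 * d * d * X"
  proof -
    have "(d + 1) * (d + 1) * X + (2 * X - 2) * (2 * d) \<le> (d + 1) * (d + 1) * X + 4 * d * X"
      using d1 by (simp add: algebra_simps)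
    also have "\<dots> = (d * d + 6 * d + 1) * X" by (simp add: algebra_simps)
    also have "\<dots> \<le> (16 * d * d) * X"
    proof (rule mult_right_mono)
      have "6 * d \<le> 6 * d * d" using d1 by simp
      moreover have "1 * 1 \<le> d * d" using d1 by (intro mult_mono) auto
      ultimately show "d * d + 6 * d + 1 \<le> 16 * d * d" by simp
    qed (use X2 in simp)
    finally show ?thesis using nhi by simp
  qed
  have L: "2 * d * X \<le> real (length Isl)"
  proof -
    have "real (length Isl) = real M + real (M - 1) * (2 * d)" by (simp add: Isl_len d_def)
    also have "\<dots> = (2 * X - 1) + (2 * X - 2) * (2 * d)" using Mr M1r by simp
    finally have e: "real (length Isl) = (2 * X - 1) + (2 * X - 2) * (2 * d)" .
    have a: "X * (2 * d) \<le> (2 * X - 2) * (2 * d)" using X2 d1 by (intro mult_right_mono) auto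
    have b: "2 * d * X = X * (2 * d)" by simp
    show ?thesis unfolding e b using a X2 by linarith
  qed
  have O: "real (Opt_P SS colr) \<le> 4 * d"
  proof -
    have "real (Opt_P SS colr) \<le> real (3 * D + 1)" using Opt_le by (simp only: of_nat_le_iff)
    then show ?thesis using d1 by (simp add: d_def)
  qed
  have lnX: "d / 2 \<le> ln X"
  proof -
    have "ln X = d * ln 2" by (simp add: X_def d_def ln_realpow)
    moreover have "d * (1/2) \<le> d * ln 2" using ln2_half d1 by (intro mult_left_mono) auto
    ultimately show ?thesis by simp
  qed
  have "0 \<le> d * X" using d1 X2 by simp
  then have Xn: "X \<le> n" using nlo by (simp add: algebra_simps)
  have lnn: "d / 2 \<le> ln n"
  proof -
    have "ln X \<le> ln n" using Xn X2 by simp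
    then show ?thesis using lnX by simp
  qed
  have sq: "(d / 2)\<^sup>2 \<le> (ln n)\<^sup>2" using lnn d1 by (intro power_mono) auto
  have dpos: "0 < (d / 2)\<^sup>2" using d1 by simp
  have n0: "0 \<le> n" by (simp add: n_def)
  have Q: "n / (ln n)\<^sup>2 \<le> n / (d / 2)\<^sup>2"
  proof (rule divide_left_mono[OF sq n0])
    have "0 < (ln n)\<^sup>2" using dpos sq by linarith
    then show "0 < (ln n)\<^sup>2 * (d / 2)\<^sup>2" using dpos by (rule mult_pos_pos)
  qed
  have Q2: "n / (d / 2)\<^sup>2 \<le> 64 * X"
  proof -
    have "n / (d / 2)\<^sup>2 = 4 * n / (d * d)" by (simp add: power2_eq_square)
    also have "\<dots> \<le> 4 * (16 * d * d * X) / (d * d)" using nhi2 d1 by (intro divide_right_mono) (auto simp: algebra_simps)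
    also have "\<dots> = 64 * X" using d1 by simp
    finally show ?thesis .
  qed
  have Q0: "0 \<le> n / (ln n)\<^sup>2" using n0 by simp
  have "(1/128) * (n / (ln n)\<^sup>2) * real (Opt_P SS colr) \<le> (1/128) * (64 * X) * (4 * d)"
    using Q Q2 O Q0 X2 by (intro mult_mono) auto
  also have "\<dots> = 2 * d * X" by simp
  also have "\<dots> \<le> real (length Isl)" by (rule L)
  finally show ?thesis by (simp add: n_def)
qed

end

theorem lemma2:
  shows "\<exists>c > (0::real). \<forall>N::nat. \<exists>(S::point set) (col::point \<Rightarrow> nat) (k::nat).
           finite S \<and> 2 \<le> k \<and> col ` S \<subseteq> {..<k} \<and> N \<le> card S \<and>
           (\<exists>Is. greedy_run S col Is \<and>
              real (length Is) \<ge> c * (real (card S) / (ln (real (card S)))\<^sup>2) * real (Opt_P S col))"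
proof (intro exI[of _ "1/128::real"] conjI allI)
  show "(0::real) < 1/128" by simp
  fix N :: nat
  define D where "D = Suc N"
  interpret cons D by unfold_locales (simp add: D_def)
  have N: "N \<le> card SS"
  proof -
    have "1 \<le> (2::nat) ^ D" by simp
    then have "(D + 1) * 1 \<le> (D + 1) * 2 ^ D" by (rule mult_le_mono2)
    then have "N \<le> (D + 1) * 2 ^ D" using D_def by simp
    then show ?thesis using card_SS_ge by linarith
  qed
  have k: "2 \<le> 2 * D + 1" using D_def by simp
  show "\<exists>(S::point set) (col::point \<Rightarrow> nat) (k::nat).
           finite S \<and> 2 \<le> k \<and> col ` S \<subseteq> {..<k} \<and> N \<le> card S \<and>
           (\<exists>Is. greedy_run S col Is \<and>
              real (length Is) \<ge> 1/128 * (real (card S) / (ln (real (card S)))\<^sup>2) * real (Opt_P S col))"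
    using finite_SS k colr_range N greedy final_ineq by blast
qed


end
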